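(* Let $\mathcal{I},\mathcal{J}$ be finite index sets, let $U_i>0$ ($i\in\mathcal{I}$) be bandwidths and $d_j\ge1$ ($j\in\mathcal{J}$) integer memory sizes, and let $\alpha_{ij}\ge0$ with $\sum_{i,j}\alpha_{ij}=1$. Let $C=\{1,\dots,m\}$ and $\bar\lambda_c>0$ for $c\in C$, $\bar\lambda=\sum_{c}\bar\lambda_c$, and $\rho=\bar\lambda/\sum_{i,j}\alpha_{ij}U_i$. For each $n$, consider the instance with $n$ servers, of which a fraction $\alpha_{ij}$ have bandwidth $U_i$ and memory size $d_j$, and content popularities $\lambda_c=n\bar\lambda_c$, and apply to it the \texttt{greedy} allocation algorithm: initialize $\mathsf{flow}(s)=U_s$, $\mathsf{deg}(s)=d_s$, $\mathsf{flow}(c)=\lambda_c$, $a_{sc}=0$; while some $(s,c)$ has $\mathsf{flow}(s)\mathsf{deg}(s)\mathsf{flow}(c)>0$, choose $s^*\in\arg\max_{s:\mathsf{deg}(s)>0}\mathsf{flow}(s)$, $c^*\in\arg\max_c\mathsf{flow}(c)$, let $f=\min(\mathsf{flow}(s^* ),\mathsf{flow}(c^* ))$, decrease $\mathsf{flow}(s^* )$ and $\mathsf{flow}(c^* )$ by $f$, decrease $\mathsf{deg}(s^* )$ by 1, and set $a_{s^*c^*}=1$. For $K\subseteq C$ let $q^{(n)}_{ijK}$ be the fraction of servers with bandwidth $U_i$ and memory size $d_j$ whose cache contents $\{c:a_{sc}=1\}$ equal $K$, let $q_{ijK}=\lim_n q^{(n)}_{ijK}$, write $q_{ijc}$ for $q_{ij\{c\}}$,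 and let $\theta_c=\sum_{i\in\mathcal{I},j\in\mathcal{J}}\alpha_{ij}U_iq_{ijc}$. Then $q_{ijK}=0$ for all $K$ with $|K|\ge2$. Furthermore, if $\rho\le1$ then $\theta_c=\bar\lambda_c$ for all $c\in C$. If $\rho>1$, the popularities are ordered as $\bar\lambda_1>\bar\lambda_2>\dots>\bar\lambda_m>0$, and $c^*\in\{1,\dots,m\}$ is such that \[ \frac{\bar\lambda}{\rho}\in\Big(\sum_{c'=1}^{c^*-1}\bar\lambda_{c'}-(c^*-1)\bar\lambda_{c^*},\ \sum_{c'=1}^{c^*}\bar\lambda_{c'}-c^*\bar\lambda_{c^*+1}\Big] \] (with the convention $\bar\lambda_{m+1}=0$), then \[ \theta_c=\begin{cases}\bar\lambda_c-\frac{1}{c^*}\Big[\sum_{c'=1}^{c^*}\bar\lambda_{c'}-\frac{\bar\lambda}{\rho}\Big], & 1\le c\le c^*,\\ 0, & c^*+1\le c\le m.\end{cases} \]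
   Context: A server with bandwidth $U$ can serve $U$ requests simultaneously; a server with memory size $d$ can store at most $d$ contents. $\bar\lambda/\rho=\sum_{i,j}\alpha_{ij}U_i$ is the per-server total bandwidth. The number $n\alpha_{ij}$ of servers of each type is assumed integral. *)

theory Defs
  imports "HOL-Analysis.Analysis"
begin

text \<open>State of the greedy algorithm: (flow of servers, remaining degree of servers,
  flow of contents, allocation set of pairs (s,c) with a_sc = 1).
  Servers are 0..<n, contents are 1..m.\<close>
type_synonym gstate = "(nat \<Rightarrow> real) \<times> (nat \<Rightarrow> nat) \<times> (nat \<Rightarrow> real) \<times> (nat \<times> nat) set"

definition greedy_guard :: "nat \<Rightarrow> nat \<Rightarrow> gstate \<Rightarrow> bool" where
  "greedy_guard n m st = (case st of (fs, ds, fc, a) \<Rightarrow>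
     (\<exists>s<n. \<exists>c\<in>{1..m}. fs s * real (ds s) * fc c > 0))"

definition greedy_step :: "nat \<Rightarrow> nat \<Rightarrow> gstate \<Rightarrow> gstate \<Rightarrow> bool" where
  "greedy_step n m st st' = (case st of (fs, ds, fc, a) \<Rightarrow>
     greedy_guard n m st \<and>
     (\<exists>s c. s < n \<and> ds s > 0 \<and> (\<forall>s'<n. ds s' > 0 \<longrightarrow> fs s' \<le> fs s) \<and>
            c \<in> {1..m} \<and> (\<forall>c'\<in>{1..m}. fc c' \<le> fc c) \<and>
            (let f = min (fs s) (fc c) in
              st' = (fs(s := fs s - f), ds(s := ds s - 1), fc(c := fc c - f), insert (s, c) a))))"

definition greedy_output :: "nat \<Rightarrow> nat \<Rightarrow> (nat \<Rightarrow> real) \<Rightarrow> (nat \<Rightarrow> nat) \<Rightarrow> (nat \<Rightarrow> real)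
    \<Rightarrow> (nat \<times> nat) set \<Rightarrow> bool" where
  "greedy_output n m Us ds lam a = (\<exists>st. (greedy_step n m)\<^sup>*\<^sup>* (Us, ds, lam, {}) st \<and>
      \<not> greedy_guard n m st \<and> a = snd (snd (snd st)))"

definition cache_frac :: "('i \<Rightarrow> 'j \<Rightarrow> real) \<Rightarrow> (nat \<Rightarrow> 'i \<times> 'j) \<Rightarrow> (nat \<times> nat) set \<Rightarrow> nat
    \<Rightarrow> 'i \<Rightarrow> 'j \<Rightarrow> nat set \<Rightarrow> real" where
  "cache_frac \<alpha> tp a n i j K =
     real (card {s. s < n \<and> tp s = (i, j) \<and> {c. (s, c) \<in> a} = K}) / (real n * \<alpha> i j)"

end

theory Submission
  imports Defs
begin


definition ginv :: "nat \<Rightarrow> nat \<Rightarrow> (nat \<Rightarrow> real) \<Rightarrow> (nat \<Rightarrow> nat) \<Rightarrow> (nat \<Rightarrow> real) \<Rightarrow> real \<Rightarrow> gstate \<Rightarrow> bool" where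
 "ginv n m Us ds0 lam Umax st = (case st of (fs, ds, fc, a) \<Rightarrow>
 (\<forall>s<n. 0 \<le> fs s \<and> fs s \<le> Us s) \<and>
 (\<forall>c\<in>{1..m}. 0 \<le> fc c \<and> fc c \<le> lam c) \<and>
 a \<subseteq> {..<n} \<times> {1..m} \<and>
 (\<forall>s<n. {c. (s,c)\<in>a} = {} \<longrightarrow> fs s = Us s \<and> ds s = ds0 s) \<and>
 card {s. s<n \<and> ((fs s > 0 \<and> {c. (s,c)\<in>a} \<noteq> {}) \<or> card {c. (s,c)\<in>a} \<ge> 2)} + card {c\<in>{1..m}. fc c > 0} \<le> m \<and>
 (\<forall>c\<in>{1..m}. \<forall>c'\<in>{1..m}. fc c < lam c \<longrightarrow> fc c' \<le> fc c + Umax) \<and>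
 (\<exists>x. (\<forall>s c. 0 \<le> x s c) \<and> (\<forall>s c. 0 < x s c \<longrightarrow> (s,c)\<in>a) \<and>
   (\<forall>s<n. Us s - fs s = (\<Sum>c\<in>{1..m}. x s c)) \<and> (\<forall>c\<in>{1..m}. lam c - fc c = (\<Sum>s<n. x s c))))"

lemma ginv_init:
  assumes "\<forall>s<n. 0 \<le> Us s" "\<forall>c\<in>{1..m}. 0 \<le> lam c"
  shows "ginv n m Us ds0 lam Umax (Us, ds0, lam, {})"
proof -
  have "card {c\<in>{1..m}. lam c > 0} \<le> card {1..m}" by (rule card_mono) auto
  then show ?thesis using assms unfolding ginv_def
    by (auto intro!: exI[of _ "\<lambda>s c. 0"])
qed

lemma pos3: "0 \<le> (a::real) \<Longrightarrow> 0 \<le> b \<Longrightarrow> 0 \<le> c \<Longrightarrow> a * b * c > 0 \<Longrightarrow> a > 0 \<and> b > 0 \<and> c > 0"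
  by (metis less_eq_real_def mult_eq_0_iff)

lemma ginv_step:
  assumes inv: "ginv n m Us ds0 lam Umax st" and stp: "greedy_step n m st st'"
    and Ub: "\<forall>s<n. Us s \<le> Umax"
  shows "ginv n m Us ds0 lam Umax st'"
proof -
  obtain fs ds fc a where st: "st = (fs, ds, fc, a)" by (cases st) auto
  from stp st have gd: "greedy_guard n m st" by (simp add: greedy_step_def)
  from stp st obtain s c where s: "s < n" "ds s > 0" "\<forall>s'<n. ds s' > 0 \<longrightarrow> fs s' \<le> fs s"
     and c: "c \<in> {1..m}" "\<forall>c'\<in>{1..m}. fc c' \<le> fc c"
     and st': "st' = (fs(s := fs s - min (fs s) (fc c)), ds(s := ds s - 1), fc(c := fc c - min (fs s) (fc c)), insert (s, c) a)"
    unfolding greedy_step_def Let_def by auto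
  define f where "f = min (fs s) (fc c)"
  have st'': "st' = (fs(s := fs s - f), ds(s := ds s - 1), fc(c := fc c - f), insert (s, c) a)"
    using st' f_def by simp
  note I = inv[unfolded st ginv_def prod.case]
  have fsb: "\<forall>s<n. 0 \<le> fs s \<and> fs s \<le> Us s" using I by blast
  have fcb: "\<forall>c\<in>{1..m}. 0 \<le> fc c \<and> fc c \<le> lam c" using I by blast
  have aS: "a \<subseteq> {..<n} \<times> {1..m}" using I by blast
  have unt: "\<forall>s<n. {c. (s,c)\<in>a} = {} \<longrightarrow> fs s = Us s \<and> ds s = ds0 s" using I by blast
  have cardI: "card {s. s<n \<and> ((fs s > 0 \<and> {c. (s,c)\<in>a} \<noteq> {}) \<or> card {c. (s,c)\<in>a} \<ge> 2)} + card {c\<in>{1..m}. fc c > 0} \<le> m"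
    using I by blast
  have wf: "\<forall>c\<in>{1..m}. \<forall>c'\<in>{1..m}. fc c < lam c \<longrightarrow> fc c' \<le> fc c + Umax" using I by blast
  obtain x where x: "\<forall>s c. 0 \<le> x s c" "\<forall>s c. 0 < x s c \<longrightarrow> (s,c)\<in>a"
     "\<forall>s<n. Us s - fs s = (\<Sum>c\<in>{1..m}. x s c)" "\<forall>c\<in>{1..m}. lam c - fc c = (\<Sum>s<n. x s c)"
    using I by blast
  from gd st obtain s0 c0 where s0: "s0 < n" "c0 \<in> {1..m}" "fs s0 * real (ds s0) * fc c0 > 0"
    unfolding greedy_guard_def by auto
  have "fs s0 > 0 \<and> real (ds s0) > 0 \<and> fc c0 > 0"
    using pos3[OF _ _ _ s0(3)] fsb fcb s0 by auto
  hence fsp: "fs s > 0" and fcp: "fc c > 0" using s(3) c(2) s0 by force+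
  have fpos: "f > 0" using fsp fcp f_def by simp
  have fle: "f \<le> fs s" "f \<le> fc c" using f_def by auto
  have fU: "f \<le> Umax" using fle fsb Ub s(1) by force
  define fs' where "fs' = fs(s := fs s - f)"
  define ds' where "ds' = ds(s := ds s - 1)"
  define fc' where "fc' = fc(c := fc c - f)"
  define a' where "a' = insert (s, c) a"
  have cache': "\<And>t. {c'. (t,c') \<in> a'} = (if t = s then insert c {c'. (t,c') \<in> a} else {c'. (t,c') \<in> a})"
    unfolding a'_def by auto
  have P1: "\<forall>s<n. 0 \<le> fs' s \<and> fs' s \<le> Us s" using fsb fle fpos unfolding fs'_def
    by (smt (verit) fun_upd_apply)
  have P2: "\<forall>c\<in>{1..m}. 0 \<le> fc' c \<and> fc' c \<le> lam c" using fcb fle fpos c unfolding fc'_def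
    by (metis (no_types, lifting) diff_ge_0_iff_ge diff_le_eq fun_upd_apply le_add_same_cancel1 less_eq_real_def order_trans)
  have P3: "a' \<subseteq> {..<n} \<times> {1..m}" using aS s c unfolding a'_def by auto
  have P4: "\<forall>t<n. {c'. (t,c')\<in>a'} = {} \<longrightarrow> fs' t = Us t \<and> ds' t = ds0 t"
  proof (intro allI impI)
    fix t assume t: "t < n" "{c'. (t,c')\<in>a'} = {}"
    hence "t \<noteq> s" unfolding a'_def by auto
    thus "fs' t = Us t \<and> ds' t = ds0 t" using t unt cache'[of t] unfolding fs'_def ds'_def by auto
  qed
  define Bad where "Bad = {t. t<n \<and> ((fs t > 0 \<and> {c. (t,c)\<in>a} \<noteq> {}) \<or> card {c. (t,c)\<in>a} \<ge> 2)}"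
  define Bad' where "Bad' = {t. t<n \<and> ((fs' t > 0 \<and> {c. (t,c)\<in>a'} \<noteq> {}) \<or> card {c. (t,c)\<in>a'} \<ge> 2)}"
  define Pos where "Pos = {c\<in>{1..m}. fc c > 0}"
  define Pos' where "Pos' = {c\<in>{1..m}. fc' c > 0}"
  have finB: "finite Bad" unfolding Bad_def by auto
  have finP: "finite Pos" unfolding Pos_def by auto
  have cardB: "card Bad + card Pos \<le> m" using cardI unfolding Bad_def Pos_def .
  have B1: "Bad' \<subseteq> insert s Bad"
    unfolding Bad'_def Bad_def using cache' unfolding fs'_def by auto
  have P5: "card Bad' + card Pos' \<le> m"
  proof (cases "fc c \<le> fs s")
    case True
    hence "f = fc c" using f_def by simp
    hence "Pos' = Pos - {c}" unfolding Pos'_def Pos_def fc'_def by auto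
    moreover have "c \<in> Pos" using c fcp unfolding Pos_def by auto
    ultimately have "card Pos' + 1 = card Pos" using finP
      by (metis One_nat_def Suc_pred card.remove card_gt_0_iff empty_iff plus_1_eq_Suc add.commute)
    moreover have "card Bad' \<le> card Bad + 1"
      using card_mono[OF _ B1] finB card_insert_le_m1 by (metis Suc_eq_plus1 card_insert_if finite_insert le_SucI)
    ultimately show ?thesis using cardB by linarith
  next
    case False
    hence ff: "f = fs s" using f_def by simp
    hence "Pos' = Pos" unfolding Pos'_def Pos_def fc'_def using False fcp by auto
    moreover have "Bad' \<subseteq> Bad"
    proof
      fix t assume t: "t \<in> Bad'"
      show "t \<in> Bad"
      proof (cases "t = s")
        case False thus ?thesis using t B1 by auto
      next
        case True
        have "fs' s = 0" using ff unfolding fs'_def by simp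
        hence cs2: "card (insert c {c'. (s,c') \<in> a}) \<ge> 2" using t True cache'[of s] unfolding Bad'_def by auto
        have "{c'. (s,c') \<in> a} \<noteq> {}"
        proof
          assume "{c'. (s,c') \<in> a} = {}" thus False using cs2 by simp
        qed
        thus ?thesis using True s fsp unfolding Bad_def by auto
      qed
    qed
    hence "card Bad' \<le> card Bad" using finB card_mono by blast
    ultimately show ?thesis using cardB by (simp only:)
  qed
  have P6: "\<forall>c1\<in>{1..m}. \<forall>c2\<in>{1..m}. fc' c1 < lam c1 \<longrightarrow> fc' c2 \<le> fc' c1 + Umax"
  proof (intro ballI impI)
    fix c1 c2 assume h: "c1 \<in> {1..m}" "c2 \<in> {1..m}" "fc' c1 < lam c1"
    have le: "fc' c2 \<le> fc c2" unfolding fc'_def using fpos by auto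
    show "fc' c2 \<le> fc' c1 + Umax"
    proof (cases "c1 = c")
      case True
      have "fc c2 \<le> fc c" using c h by auto
      thus ?thesis using True le fU unfolding fc'_def by auto
    next
      case False
      thus ?thesis using wf h le unfolding fc'_def by fastforce
    qed
  qed
  define x' where "x' = (\<lambda>t c'. x t c' + (if t = s then (if c' = c then f else 0) else 0))"
  have P7: "(\<forall>t c'. 0 \<le> x' t c') \<and> (\<forall>t c'. 0 < x' t c' \<longrightarrow> (t,c')\<in>a') \<and>
   (\<forall>t<n. Us t - fs' t = (\<Sum>c'\<in>{1..m}. x' t c')) \<and> (\<forall>c'\<in>{1..m}. lam c' - fc' c' = (\<Sum>t<n. x' t c'))"
  proof (intro conjI allI impI ballI)
    fix t c' show "0 \<le> x' t c'" using x fpos unfolding x'_def by auto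
  next
    fix t c' assume "0 < x' t c'" thus "(t,c') \<in> a'" using x unfolding x'_def a'_def
      by (auto split: if_splits)
  next
    fix t assume t: "t < n"
    have e1: "(\<Sum>c'\<in>{1..m}. (if t = s then (if c' = c then f else 0) else 0)) = (if t = s then f else 0)"
      using c by (cases "t = s") simp_all
    have "(\<Sum>c'\<in>{1..m}. x' t c') = (\<Sum>c'\<in>{1..m}. x t c') + (if t = s then f else 0)"
      unfolding x'_def sum.distrib e1 ..
    moreover have "Us t - fs' t = (Us t - fs t) + (if t = s then f else 0)" unfolding fs'_def by simp
    moreover have "Us t - fs t = (\<Sum>c'\<in>{1..m}. x t c')" using x(3) t by blast
    ultimately show "Us t - fs' t = (\<Sum>c'\<in>{1..m}. x' t c')" by simp
  next
    fix c' assume c': "c' \<in> {1..m}"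
    have e2: "(\<Sum>t<n. (if t = s then (if c' = c then f else 0) else 0)) = (if c' = c then f else 0)"
      using s(1) by simp
    have "(\<Sum>t<n. x' t c') = (\<Sum>t<n. x t c') + (if c' = c then f else 0)"
      unfolding x'_def sum.distrib e2 ..
    moreover have "lam c' - fc' c' = (lam c' - fc c') + (if c' = c then f else 0)" unfolding fc'_def by simp
    moreover have "lam c' - fc c' = (\<Sum>t<n. x t c')" using x(4) c' by blast
    ultimately show "lam c' - fc' c' = (\<Sum>t<n. x' t c')" by simp
  qed
  show ?thesis unfolding st'' ginv_def
    using P1 P2 P3 P4 P5 P6 P7 unfolding fs'_def[symmetric] ds'_def[symmetric] fc'_def[symmetric] a'_def[symmetric]
      Bad'_def Pos'_def by (simp only: prod.case) blast
qed



lemma ginv_run: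
  assumes "(greedy_step n m)\<^sup>*\<^sup>* st0 st" "ginv n m Us ds0 lam Umax st0" "\<forall>s<n. Us s \<le> Umax"
  shows "ginv n m Us ds0 lam Umax st"
  using assms(1)
proof (induction rule: rtranclp_induct)
  case base show ?case by (rule assms(2))
next
  case (step y z) show ?case by (rule ginv_step[OF step.IH step.hyps(2) assms(3)])
qed

lemma sum_small:
  fixes g :: "nat \<Rightarrow> real"
  assumes "finite A" "finite G" "card G \<le> m" "\<forall>s\<in>A. 0 \<le> g s \<and> g s \<le> M" "\<forall>s\<in>A. g s \<noteq> 0 \<longrightarrow> s \<in> G" "0 \<le> M"
  shows "0 \<le> sum g A \<and> sum g A \<le> real m * M"
proof
  show "0 \<le> sum g A" using assms(4) by (simp add: sum_nonneg)
  have "sum g A = sum g (A \<inter> G)"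
    by (rule sum.mono_neutral_right) (use assms in auto)
  also have "\<dots> \<le> (\<Sum>s\<in>A \<inter> G. M)" by (rule sum_mono) (use assms in auto)
  also have "\<dots> = real (card (A \<inter> G)) * M" by simp
  also have "\<dots> \<le> real m * M"
  proof -
    have "card (A \<inter> G) \<le> card G" by (rule card_mono) (use assms in auto)
    thus ?thesis using assms by (intro mult_right_mono) auto
  qed
  finally show "sum g A \<le> real m * M" .
qed

lemma greedy_facts:
  assumes go: "greedy_output n m Us ds0 lam a"
    and U: "\<forall>s<n. 0 < Us s \<and> Us s \<le> Umax" and Um: "0 \<le> Umax"
    and d: "\<forall>s<n. ds0 s \<ge> 1" and l: "\<forall>c\<in>{1..m}. 0 \<le> lam c"
  shows "\<exists>fc. card {s. s<n \<and> card {c. (s,c)\<in>a} \<ge> 2} \<le> m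
    \<and> (\<forall>c\<in>{1..m}. 0 \<le> fc c \<and> fc c \<le> lam c)
    \<and> (\<forall>c\<in>{1..m}. \<forall>c'\<in>{1..m}. fc c < lam c \<longrightarrow> fc c' \<le> fc c + Umax)
    \<and> (\<forall>c\<in>{1..m}. \<bar>(lam c - fc c) - (\<Sum>s\<in>{s. s<n \<and> {c'. (s,c')\<in>a} = {c}}. Us s)\<bar> \<le> 2 * real m * Umax)
    \<and> min (\<Sum>c\<in>{1..m}. lam c) (\<Sum>s<n. Us s) - real m * Umax \<le> (\<Sum>c\<in>{1..m}. lam c - fc c)
    \<and> (\<Sum>c\<in>{1..m}. lam c - fc c) \<le> (\<Sum>s<n. Us s)"
proof -
  obtain st where st: "(greedy_step n m)\<^sup>*\<^sup>* (Us, ds0, lam, {}) st" "\<not> greedy_guard n m st"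
    "a = snd (snd (snd st))" using go unfolding greedy_output_def by blast
  have "ginv n m Us ds0 lam Umax (Us, ds0, lam, {})"
    by (rule ginv_init) (use U l in auto)
  moreover have Ub: "\<forall>s<n. Us s \<le> Umax" using U by auto
  ultimately have gi: "ginv n m Us ds0 lam Umax st" using ginv_run[OF st(1)] by blast
  obtain fs ds fc where stt: "st = (fs, ds, fc, a)" using st(3) by (cases st) auto
  note I = gi[unfolded stt ginv_def prod.case]
  have fsb: "\<forall>s<n. 0 \<le> fs s \<and> fs s \<le> Us s" using I by blast
  have fcb: "\<forall>c\<in>{1..m}. 0 \<le> fc c \<and> fc c \<le> lam c" using I by blast
  have aS: "a \<subseteq> {..<n} \<times> {1..m}" using I by blast
  have unt: "\<forall>s<n. {c. (s,c)\<in>a} = {} \<longrightarrow> fs s = Us s \<and> ds s = ds0 s" using I by blast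
  define G where "G = {s. s<n \<and> ((fs s > 0 \<and> {c. (s,c)\<in>a} \<noteq> {}) \<or> card {c. (s,c)\<in>a} \<ge> 2)}"
  have cardI: "card G + card {c\<in>{1..m}. fc c > 0} \<le> m"
    using I unfolding G_def by blast
  hence cG: "card G \<le> m" by linarith
  have finG: "finite G" unfolding G_def by auto
  have wf: "\<forall>c\<in>{1..m}. \<forall>c'\<in>{1..m}. fc c < lam c \<longrightarrow> fc c' \<le> fc c + Umax" using I by blast
  obtain x where x: "\<forall>s c. 0 \<le> x s c" "\<forall>s c. 0 < x s c \<longrightarrow> (s,c)\<in>a"
     "\<forall>s<n. Us s - fs s = (\<Sum>c\<in>{1..m}. x s c)" "\<forall>c\<in>{1..m}. lam c - fc c = (\<Sum>s<n. x s c)"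
    using I by blast
  have cachefin: "\<And>s. finite {c. (s,c)\<in>a}"
    by (rule finite_subset[of _ "{1..m}"]) (use aS in auto)
  have C1: "card {s. s<n \<and> card {c. (s,c)\<in>a} \<ge> 2} \<le> m"
  proof -
    have "{s. s<n \<and> card {c. (s,c)\<in>a} \<ge> 2} \<subseteq> G" unfolding G_def by auto
    hence "card {s. s<n \<and> card {c. (s,c)\<in>a} \<ge> 2} \<le> card G" using card_mono[OF finG] by blast
    thus ?thesis using cG by linarith
  qed
  have C4: "\<forall>c\<in>{1..m}. \<bar>(lam c - fc c) - (\<Sum>s\<in>{s. s<n \<and> {c'. (s,c')\<in>a} = {c}}. Us s)\<bar> \<le> 2 * real m * Umax"
  proof
    fix c assume c: "c \<in> {1..m}"
    define Sc where "Sc = {s. s<n \<and> {c'. (s,c')\<in>a} = {c}}"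
    define R where "R = {s. s<n \<and> {c'. (s,c')\<in>a} \<noteq> {c}}"
    have finSc: "finite Sc" "finite R" unfolding Sc_def R_def by auto
    have "{..<n} = Sc \<union> R" "Sc \<inter> R = {}" unfolding Sc_def R_def by auto
    hence "(\<Sum>s<n. x s c) = (\<Sum>s\<in>Sc. x s c) + (\<Sum>s\<in>R. x s c)"
      using sum.union_disjoint[OF finSc(1) finSc(2) \<open>Sc \<inter> R = {}\<close>, of "\<lambda>s. x s c"] \<open>{..<n} = Sc \<union> R\<close> by simp
    moreover have "\<forall>s\<in>Sc. x s c = Us s - fs s"
    proof
      fix s assume s: "s \<in> Sc"
      have "\<forall>c'\<in>{1..m}. x s c' = (if c' = c then x s c else 0)"
      proof
        fix c' assume "c' \<in> {1..m}"
        show "x s c' = (if c' = c then x s c else 0)"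
        proof (cases "c' = c")
          case False
          hence "(s,c') \<notin> a" using s unfolding Sc_def by auto
          thus ?thesis using x(1,2) False by (metis less_eq_real_def)
        qed simp
      qed
      hence "(\<Sum>c'\<in>{1..m}. x s c') = (\<Sum>c'\<in>{1..m}. if c' = c then x s c else 0)"
        by (intro sum.cong) auto
      also have "\<dots> = x s c" using c by simp
      finally have "(\<Sum>c'\<in>{1..m}. x s c') = x s c" .
      thus "x s c = Us s - fs s" using x(3) s unfolding Sc_def by auto
    qed
    hence "(\<Sum>s\<in>Sc. x s c) = (\<Sum>s\<in>Sc. Us s) - (\<Sum>s\<in>Sc. fs s)"
      by (simp add: sum_subtractf[symmetric])
    moreover have "0 \<le> (\<Sum>s\<in>Sc. fs s) \<and> (\<Sum>s\<in>Sc. fs s) \<le> real m * Umax"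
    proof (rule sum_small[OF finSc(1) finG cG _ _ Um])
      show "\<forall>s\<in>Sc. 0 \<le> fs s \<and> fs s \<le> Umax" using fsb U unfolding Sc_def by force
      show "\<forall>s\<in>Sc. fs s \<noteq> 0 \<longrightarrow> s \<in> G"
      proof (intro ballI impI)
        fix s assume s: "s \<in> Sc" "fs s \<noteq> 0"
        hence "s < n" "{c'. (s,c')\<in>a} = {c}" unfolding Sc_def by auto
        moreover have "fs s > 0" using fsb s(2) \<open>s < n\<close> by force
        ultimately show "s \<in> G" unfolding G_def by auto
      qed
    qed
    moreover have "0 \<le> (\<Sum>s\<in>R. x s c) \<and> (\<Sum>s\<in>R. x s c) \<le> real m * Umax"
    proof (rule sum_small[OF finSc(2) finG cG _ _ Um])
      show "\<forall>s\<in>R. 0 \<le> x s c \<and> x s c \<le> Umax"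
      proof
        fix s assume s: "s \<in> R"
        have "x s c \<le> (\<Sum>c'\<in>{1..m}. x s c')" using c x(1) by (intro member_le_sum) auto
        moreover have sn: "s < n" using s unfolding R_def by auto
        moreover have "Us s - fs s = (\<Sum>c'\<in>{1..m}. x s c')" using x(3) sn by blast
        moreover have "0 \<le> fs s" "Us s \<le> Umax" using fsb U sn by auto
        moreover have "0 \<le> x s c" using x(1) by blast
        ultimately show "0 \<le> x s c \<and> x s c \<le> Umax" by linarith
      qed
      show "\<forall>s\<in>R. x s c \<noteq> 0 \<longrightarrow> s \<in> G"
      proof (intro ballI impI)
        fix s assume s: "s \<in> R" "x s c \<noteq> 0"
        hence "(s,c) \<in> a" using x(1,2) by (metis less_eq_real_def)
        hence cin: "c \<in> {c'. (s,c')\<in>a}" by simp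
        moreover have "{c'. (s,c')\<in>a} \<noteq> {c}" using s unfolding R_def by auto
        ultimately obtain c2 where "c2 \<in> {c'. (s,c')\<in>a}" "c2 \<noteq> c" by blast
        hence "{c, c2} \<subseteq> {c'. (s,c')\<in>a}" using cin by auto
        hence "card {c, c2} \<le> card {c'. (s,c')\<in>a}" using cachefin card_mono by blast
        hence "card {c'. (s,c')\<in>a} \<ge> 2" using \<open>c2 \<noteq> c\<close> by simp
        thus "s \<in> G" using s unfolding G_def R_def by auto
      qed
    qed
    ultimately show "\<bar>(lam c - fc c) - (\<Sum>s\<in>{s. s<n \<and> {c'. (s,c')\<in>a} = {c}}. Us s)\<bar> \<le> 2 * real m * Umax"
      using x(4) c unfolding Sc_def by auto
  qed
  have tot: "(\<Sum>c\<in>{1..m}. lam c - fc c) = (\<Sum>s<n. Us s) - (\<Sum>s<n. fs s)"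
  proof -
    have "(\<Sum>c\<in>{1..m}. lam c - fc c) = (\<Sum>c\<in>{1..m}. \<Sum>s<n. x s c)" by (rule sum.cong) (use x(4) in auto)
    also have "\<dots> = (\<Sum>s<n. \<Sum>c\<in>{1..m}. x s c)" by (rule sum.swap)
    also have "\<dots> = (\<Sum>s<n. Us s - fs s)" by (rule sum.cong) (use x(3) in auto)
    finally show ?thesis by (simp add: sum_subtractf)
  qed
  have fsnn: "0 \<le> (\<Sum>s<n. fs s)" by (rule sum_nonneg) (use fsb in auto)
  have C6: "(\<Sum>c\<in>{1..m}. lam c - fc c) \<le> (\<Sum>s<n. Us s)" using tot fsnn by linarith
  have C5: "min (\<Sum>c\<in>{1..m}. lam c) (\<Sum>s<n. Us s) - real m * Umax \<le> (\<Sum>c\<in>{1..m}. lam c - fc c)"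
  proof (cases "\<exists>c0\<in>{1..m}. fc c0 > 0")
    case False
    hence "\<forall>c\<in>{1..m}. fc c = 0" using fcb by force
    hence "(\<Sum>c\<in>{1..m}. lam c - fc c) = (\<Sum>c\<in>{1..m}. lam c)" by simp
    moreover have "0 \<le> real m * Umax" using Um by simp
    ultimately show ?thesis by linarith
  next
    case True
    then obtain c0 where c0: "c0 \<in> {1..m}" "fc c0 > 0" by blast
    have ng: "\<forall>s<n. \<not> (fs s * real (ds s) * fc c0 > 0)"
      using st(2) c0(1) unfolding stt greedy_guard_def by auto
    have "0 \<le> (\<Sum>s<n. fs s) \<and> (\<Sum>s<n. fs s) \<le> real m * Umax"
    proof (rule sum_small[OF _ finG cG _ _ Um])
      show "\<forall>s\<in>{..<n}. 0 \<le> fs s \<and> fs s \<le> Umax" using fsb U by force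
      show "\<forall>s\<in>{..<n}. fs s \<noteq> 0 \<longrightarrow> s \<in> G"
      proof (intro ballI impI)
        fix s assume s: "s \<in> {..<n}" "fs s \<noteq> 0"
        hence fp: "fs s > 0" using fsb by force
        have "\<not> (fs s * real (ds s) * fc c0 > 0)" using ng s(1) by auto
        hence "ds s = 0" using fp c0(2) by (metis mult_pos_pos of_nat_0_less_iff neq0_conv)
        hence "{c. (s,c)\<in>a} \<noteq> {}" using unt d s by force
        thus "s \<in> G" using fp s unfolding G_def by auto
      qed
    qed auto
    thus ?thesis using tot by linarith
  qed
  show ?thesis using C1 fcb wf C4 C5 C6 by blast
qed



lemma g_lip1:
  fixes a :: "nat \<Rightarrow> real"
  assumes "finite C" "c0 \<in> C" "x \<le> y" "y \<le> a c0"
  shows "y - x \<le> (\<Sum>c\<in>C. max 0 (a c - x)) - (\<Sum>c\<in>C. max 0 (a c - y))"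
proof -
  have "(\<Sum>c\<in>C. max 0 (a c - x)) - (\<Sum>c\<in>C. max 0 (a c - y)) = (\<Sum>c\<in>C. max 0 (a c - x) - max 0 (a c - y))"
    by (simp add: sum_subtractf)
  also have "\<dots> \<ge> max 0 (a c0 - x) - max 0 (a c0 - y)"
    by (rule member_le_sum) (use assms in auto)
  finally show ?thesis using assms by simp
qed

lemma g_lip:
  fixes a :: "nat \<Rightarrow> real"
  assumes "finite C" "c0 \<in> C" "x \<le> a c0" "y \<le> a c0"
  shows "\<bar>x - y\<bar> \<le> \<bar>(\<Sum>c\<in>C. max 0 (a c - x)) - (\<Sum>c\<in>C. max 0 (a c - y))\<bar>"
proof (cases "x \<le> y")
  case True thus ?thesis using g_lip1[of C c0 x y a] assms True by linarith
next
  case False thus ?thesis using g_lip1[of C c0 y x a] assms by linarith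
qed

lemma waterfill:
  fixes a F :: "nat \<Rightarrow> real"
  assumes m1: "1 \<le> m"
  and F: "\<forall>c\<in>{1..m}. 0 \<le> F c \<and> F c \<le> a c"
  and amax: "\<forall>c\<in>{1..m}. a c \<le> a 1"
  and wf: "\<forall>c\<in>{1..m}. \<forall>c'\<in>{1..m}. F c < a c \<longrightarrow> F c' \<le> F c + U"
  and U0: "0 \<le> U"
  and S: "\<bar>(\<Sum>c\<in>{1..m}. a c - F c) - (\<Sum>c\<in>{1..m}. max 0 (a c - L))\<bar> \<le> E"
  and L: "L \<le> a 1"
  shows "\<forall>c\<in>{1..m}. \<bar>F c - min (a c) L\<bar> \<le> U + real m * U + E"
proof -
  have 1: "1 \<in> {1..m}" using m1 by simp
  obtain \<mu> where mu: "\<mu> \<le> a 1" "\<forall>c\<in>{1..m}. \<bar>F c - min (a c) \<mu>\<bar> \<le> U"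
  proof (cases "\<exists>c0\<in>{1..m}. F c0 < a c0")
    case True
    then obtain c0 where c0: "c0 \<in> {1..m}" "F c0 < a c0" by blast
    show ?thesis
    proof (rule that[of "F c0"])
      show "F c0 \<le> a 1" using c0 amax by force
      show "\<forall>c\<in>{1..m}. \<bar>F c - min (a c) (F c0)\<bar> \<le> U"
      proof
        fix c assume c: "c \<in> {1..m}"
        have h1: "F c \<le> a c" "0 \<le> F c" using F c by auto
        have h2: "F c \<le> F c0 + U" using wf c0 c by blast
        have h3: "F c < a c \<longrightarrow> F c0 \<le> F c + U" using wf c0 c by blast
        show "\<bar>F c - min (a c) (F c0)\<bar> \<le> U"
          using h1 h2 h3 U0 by (cases "F c < a c") (auto simp: min_def abs_if)
      qed
    qed
  next
    case False
    hence "\<forall>c\<in>{1..m}. F c = a c" using F by force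
    thus ?thesis using that[of "a 1"] amax U0 by (simp add: min_def)
  qed
  have eq: "(\<Sum>c\<in>{1..m}. a c - F c) - (\<Sum>c\<in>{1..m}. max 0 (a c - \<mu>)) = (\<Sum>c\<in>{1..m}. min (a c) \<mu> - F c)"
    unfolding sum_subtractf[symmetric] by (rule sum.cong) (auto simp: min_def max_def)
  have "\<bar>\<Sum>c\<in>{1..m}. min (a c) \<mu> - F c\<bar> \<le> (\<Sum>c\<in>{1..m}. \<bar>min (a c) \<mu> - F c\<bar>)" by (rule sum_abs)
  also have "\<dots> \<le> (\<Sum>c\<in>{1..m}. U)" by (rule sum_mono) (use mu in force)
  also have "\<dots> = real m * U" by simp
  finally have "\<bar>(\<Sum>c\<in>{1..m}. a c - F c) - (\<Sum>c\<in>{1..m}. max 0 (a c - \<mu>))\<bar> \<le> real m * U" using eq by simp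
  hence "\<bar>(\<Sum>c\<in>{1..m}. max 0 (a c - \<mu>)) - (\<Sum>c\<in>{1..m}. max 0 (a c - L))\<bar> \<le> real m * U + E"
    using S by linarith
  moreover have "\<bar>\<mu> - L\<bar> \<le> \<bar>(\<Sum>c\<in>{1..m}. max 0 (a c - \<mu>)) - (\<Sum>c\<in>{1..m}. max 0 (a c - L))\<bar>"
    by (rule g_lip[of "{1..m}" 1 \<mu> a L]) (use 1 mu(1) L in auto)
  ultimately have muL: "\<bar>\<mu> - L\<bar> \<le> real m * U + E" by linarith
  show ?thesis
  proof
    fix c assume c: "c \<in> {1..m}"
    have "\<bar>min (a c) \<mu> - min (a c) L\<bar> \<le> \<bar>\<mu> - L\<bar>" by (auto simp: min_def abs_if)
    moreover have "\<bar>F c - min (a c) \<mu>\<bar> \<le> U" using mu(2) c by blast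
    ultimately show "\<bar>F c - min (a c) L\<bar> \<le> U + real m * U + E" using muL by linarith
  qed
qed

lemma common_denom:
  assumes "finite S" "\<forall>x\<in>S. (f x :: real) \<in> \<rat>"
  shows "\<exists>D::nat. D > 0 \<and> (\<forall>x\<in>S. real D * f x \<in> \<int>)"
  using assms
proof (induction S rule: finite_induct)
  case empty thus ?case by (intro exI[of _ 1]) auto
next
  case (insert x S)
  then obtain D where D: "D > 0" "\<forall>y\<in>S. real D * f y \<in> \<int>" by auto
  obtain p b where pb: "b > 0" "f x = of_int p / of_int b" using insert.prems Rats_cases' by blast
  define D' where "D' = D * nat b"
  have "real D' = real D * of_int b" using pb unfolding D'_def by simp
  show ?case
  proof (intro exI[of _ D'] conjI ballI)
    show "D' > 0" using D pb unfolding D'_def by simp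
    fix y assume y: "y \<in> insert x S"
    show "real D' * f y \<in> \<int>"
    proof (cases "y = x")
      case True
      have "real D' * f y = real D * of_int p" using True pb \<open>real D' = _\<close> by simp
      thus ?thesis by simp
    next
      case False
      hence "y \<in> S" using y by simp
      hence "real D * f y \<in> \<int>" using D by blast
      hence "of_int b * (real D * f y) \<in> \<int>" by simp
      thus ?thesis using \<open>real D' = _\<close> by (simp add: mult_ac)
    qed
  qed
qed

lemma Ints_nonneg_Nats: "(x::real) \<in> \<int> \<Longrightarrow> 0 \<le> x \<Longrightarrow> x \<in> \<nat>"
proof -
  assume "x \<in> \<int>" "0 \<le> x"
  then obtain z where z: "x = of_int z" by (auto elim: Ints_cases)
  hence "x = of_nat (nat z)" using \<open>0 \<le> x\<close> by simp
  thus ?thesis by simp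
qed

lemma sum_by_type:
  fixes tp :: "nat \<Rightarrow> 'i \<times> 'j" and U :: "'i \<Rightarrow> real"
  assumes "finite I" "finite J" "finite A" "\<forall>s\<in>A. tp s \<in> I \<times> J"
  shows "(\<Sum>s\<in>A. U (fst (tp s))) = (\<Sum>i\<in>I. \<Sum>j\<in>J. U i * real (card {s\<in>A. tp s = (i,j)}))"
proof -
  have "(\<Sum>s\<in>A. U (fst (tp s))) = (\<Sum>p\<in>I \<times> J. \<Sum>s\<in>{s\<in>A. tp s = p}. U (fst (tp s)))"
    by (rule sum.group[symmetric]) (use assms in auto)
  also have "\<dots> = (\<Sum>p\<in>I \<times> J. U (fst p) * real (card {s\<in>A. tp s = p}))"
  proof (rule sum.cong[OF refl])
    fix p assume "p \<in> I \<times> J"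
    have "(\<Sum>s\<in>{s\<in>A. tp s = p}. U (fst (tp s))) = (\<Sum>s\<in>{s\<in>A. tp s = p}. U (fst p))"
      by (rule sum.cong) auto
    thus "(\<Sum>s\<in>{s\<in>A. tp s = p}. U (fst (tp s))) = U (fst p) * real (card {s\<in>A. tp s = p})"
      by simp
  qed
  also have "\<dots> = (\<Sum>i\<in>I. \<Sum>j\<in>J. U i * real (card {s\<in>A. tp s = (i,j)}))"
    unfolding sum.cartesian_product by (simp add: case_prod_unfold)
  finally show ?thesis .
qed


theorem lemma1:
  fixes I :: "'i set" and J :: "'j set" and U :: "'i \<Rightarrow> real" and d :: "'j \<Rightarrow> nat"
    and \<alpha> :: "'i \<Rightarrow> 'j \<Rightarrow> real" and m :: nat and lb :: "nat \<Rightarrow> real"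
    and tp :: "nat \<Rightarrow> nat \<Rightarrow> 'i \<times> 'j" and alloc :: "nat \<Rightarrow> (nat \<times> nat) set"
    and q :: "'i \<Rightarrow> 'j \<Rightarrow> nat set \<Rightarrow> real"
  assumes "finite I" and "finite J"
    and "\<forall>i\<in>I. U i > 0" and "\<forall>j\<in>J. d j \<ge> 1"
    and "\<forall>i\<in>I. \<forall>j\<in>J. \<alpha> i j \<ge> 0"
    and "(\<Sum>i\<in>I. \<Sum>j\<in>J. \<alpha> i j) = 1"
    and "\<forall>i\<in>I. \<forall>j\<in>J. \<alpha> i j \<in> \<rat>"
    and "\<forall>c\<in>{1..m}. lb c > 0"
    and "\<forall>n. (\<forall>i\<in>I. \<forall>j\<in>J. real n * \<alpha> i j \<in> \<nat>) \<longrightarrow>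
           (\<forall>s<n. tp n s \<in> I \<times> J) \<and>
           (\<forall>i\<in>I. \<forall>j\<in>J. real (card {s. s < n \<and> tp n s = (i, j)}) = real n * \<alpha> i j)"
    and "\<forall>n. (\<forall>i\<in>I. \<forall>j\<in>J. real n * \<alpha> i j \<in> \<nat>) \<longrightarrow>
           greedy_output n m (\<lambda>s. U (fst (tp n s))) (\<lambda>s. d (snd (tp n s)))
             (\<lambda>c. real n * lb c) (alloc n)"
    and "\<forall>i\<in>I. \<forall>j\<in>J. \<forall>K. K \<subseteq> {1..m} \<longrightarrow>
           ((\<lambda>n. cache_frac \<alpha> (tp n) (alloc n) n i j K) \<longlongrightarrow> q i j K)
             (inf sequentially (principal {n. \<forall>i\<in>I. \<forall>j\<in>J. real n * \<alpha> i j \<in> \<nat>}))"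
  shows "let lbar = (\<Sum>c\<in>{1..m}. lb c);
             \<rho> = lbar / (\<Sum>i\<in>I. \<Sum>j\<in>J. \<alpha> i j * U i);
             \<theta> = (\<lambda>c. \<Sum>i\<in>I. \<Sum>j\<in>J. \<alpha> i j * U i * q i j {c});
             lbe = (\<lambda>c. if c \<le> m then lb c else 0)
         in (\<forall>i\<in>I. \<forall>j\<in>J. \<forall>K. K \<subseteq> {1..m} \<and> card K \<ge> 2 \<longrightarrow> q i j K = 0) \<and>
            (\<rho> \<le> 1 \<longrightarrow> (\<forall>c\<in>{1..m}. \<theta> c = lb c)) \<and>
            (\<rho> > 1 \<longrightarrow> (\<forall>c\<in>{1..m}. \<forall>c'\<in>{1..m}. c < c' \<longrightarrow> lb c' < lb c) \<longrightarrow>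
              (\<forall>cs\<in>{1..m}.
                 (\<Sum>c'\<in>{1..<cs}. lb c') - real (cs - 1) * lb cs < lbar / \<rho> \<and>
                 lbar / \<rho> \<le> (\<Sum>c'\<in>{1..cs}. lb c') - real cs * lbe (cs + 1) \<longrightarrow>
                 (\<forall>c\<in>{1..m}. \<theta> c = (if c \<le> cs
                     then lb c - (1 / real cs) * ((\<Sum>c'\<in>{1..cs}. lb c') - lbar / \<rho>)
                     else 0))))"
proof -
  define V where "V = {n::nat. \<forall>i\<in>I. \<forall>j\<in>J. real n * \<alpha> i j \<in> \<nat>}"
  define Fl where "Fl = inf sequentially (principal V)"
  define D where "D = (\<Sum>i\<in>I. \<Sum>j\<in>J. \<alpha> i j * U i)"
  define lbar where "lbar = (\<Sum>c\<in>{1..m}. lb c)"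
  have fI: "finite I" and fJ: "finite J" using assms(1,2) .
  have Ine: "I \<noteq> {}" using assms(6) by auto
  define Umax where "Umax = Max (U ` I)"
  have UleM: "\<forall>i\<in>I. U i \<le> Umax" unfolding Umax_def using fI by auto
  have Um0: "0 \<le> Umax"
  proof -
    obtain i where "i \<in> I" using Ine by blast
    thus ?thesis using UleM assms(3) by force
  qed
  define Umin where "Umin = Min (U ` I)"
  have Umin0: "Umin > 0" unfolding Umin_def using fI Ine assms(3) by auto
  have UminL: "\<forall>i\<in>I. Umin \<le> U i" unfolding Umin_def using fI by auto
  have Dpos: "D > 0"
  proof -
    have "(\<Sum>i\<in>I. \<Sum>j\<in>J. \<alpha> i j * Umin) \<le> D" unfolding D_def
    proof (rule sum_mono, rule sum_mono)
      fix i j assume "i \<in> I" "j \<in> J"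
      thus "\<alpha> i j * Umin \<le> \<alpha> i j * U i" using UminL assms(5) by (intro mult_left_mono) auto
    qed
    moreover have "(\<Sum>i\<in>I. \<Sum>j\<in>J. \<alpha> i j * Umin) = Umin"
      using assms(6) by (simp add: sum_distrib_right[symmetric])
    ultimately show ?thesis using Umin0 by linarith
  qed
  obtain D0 :: nat where D0: "D0 > 0" "\<forall>p\<in>I \<times> J. real D0 * \<alpha> (fst p) (snd p) \<in> \<int>"
    using common_denom[of "I \<times> J" "\<lambda>p. \<alpha> (fst p) (snd p)"] fI fJ assms(7) by auto
  have inV: "N * D0 \<in> V" for N
  proof -
    have "\<forall>i\<in>I. \<forall>j\<in>J. real (N * D0) * \<alpha> i j \<in> \<nat>"
    proof (intro ballI)
      fix i j assume ij: "i \<in> I" "j \<in> J"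
      have "real D0 * \<alpha> i j \<in> \<int>" using D0(2) ij by force
      moreover have "0 \<le> real D0 * \<alpha> i j" using assms(5) ij by simp
      ultimately have "real D0 * \<alpha> i j \<in> \<nat>" by (rule Ints_nonneg_Nats)
      hence "real N * (real D0 * \<alpha> i j) \<in> \<nat>" by simp
      thus "real (N * D0) * \<alpha> i j \<in> \<nat>" by (simp add: mult.assoc)
    qed
    thus ?thesis unfolding V_def by simp
  qed
  have nb: "Fl \<noteq> bot"
  proof
    assume "Fl = bot"
    hence "eventually (\<lambda>n. False) Fl" by simp
    hence "eventually (\<lambda>n. n \<in> V \<longrightarrow> False) sequentially" unfolding Fl_def eventually_inf_principal .
    then obtain N where "\<forall>n\<ge>N. n \<in> V \<longrightarrow> False" unfolding eventually_sequentially by blast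
    moreover have "N * D0 \<ge> N" using D0(1) by simp
    ultimately show False using inV by blast
  qed
  have lim_eq: "l = t" if fl: "(f \<longlongrightarrow> l) Fl" and bd: "\<forall>n\<in>V. n > 0 \<longrightarrow> \<bar>f n - t\<bar> \<le> K / real n"
    for f :: "nat \<Rightarrow> real" and l t K
  proof -
    have le: "Fl \<le> sequentially" unfolding Fl_def by simp
    have "((\<lambda>n. t - K / real n) \<longlongrightarrow> t - 0) sequentially"
      by (intro tendsto_diff tendsto_const lim_const_over_n)
    hence h1: "((\<lambda>n. t - K / real n) \<longlongrightarrow> t) Fl" using tendsto_mono[OF le] by simp
    have "((\<lambda>n. t + K / real n) \<longlongrightarrow> t + 0) sequentially"
      by (intro tendsto_add tendsto_const lim_const_over_n)
    hence h2: "((\<lambda>n. t + K / real n) \<longlongrightarrow> t) Fl" using tendsto_mono[OF le] by simp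
    have ev: "eventually (\<lambda>n. n \<in> V \<longrightarrow> n > 0) sequentially"
      unfolding eventually_sequentially by (intro exI[of _ 1]) auto
    have ev1: "eventually (\<lambda>n. t - K / real n \<le> f n) Fl"
      unfolding Fl_def eventually_inf_principal using ev
      by eventually_elim (use bd in force)
    have ev2: "eventually (\<lambda>n. f n \<le> t + K / real n) Fl"
      unfolding Fl_def eventually_inf_principal using ev
      by eventually_elim (use bd in force)
    have "(f \<longlongrightarrow> t) Fl" by (rule tendsto_sandwich[OF ev1 ev2 h1 h2])
    thus ?thesis using tendsto_unique[OF nb fl] by blast
  qed
  have tpI: "\<forall>s<n. tp n s \<in> I \<times> J" if "n \<in> V" for n using assms(9) that unfolding V_def by blast
  have tpC: "\<forall>i\<in>I. \<forall>j\<in>J. real (card {s. s < n \<and> tp n s = (i, j)}) = real n * \<alpha> i j"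
    if "n \<in> V" for n using assms(9) that unfolding V_def by blast
  have GF: "\<exists>fc. card {s. s<n \<and> card {c. (s,c)\<in>alloc n} \<ge> 2} \<le> m
    \<and> (\<forall>c\<in>{1..m}. 0 \<le> fc c \<and> fc c \<le> real n * lb c)
    \<and> (\<forall>c\<in>{1..m}. \<forall>c'\<in>{1..m}. fc c < real n * lb c \<longrightarrow> fc c' \<le> fc c + Umax)
    \<and> (\<forall>c\<in>{1..m}. \<bar>(real n * lb c - fc c) - (\<Sum>s\<in>{s. s<n \<and> {c'. (s,c')\<in>alloc n} = {c}}. U (fst (tp n s)))\<bar> \<le> 2 * real m * Umax)
    \<and> min (\<Sum>c\<in>{1..m}. real n * lb c) (\<Sum>s<n. U (fst (tp n s))) - real m * Umax \<le> (\<Sum>c\<in>{1..m}. real n * lb c - fc c)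
    \<and> (\<Sum>c\<in>{1..m}. real n * lb c - fc c) \<le> (\<Sum>s<n. U (fst (tp n s)))"
    if nV: "n \<in> V" for n
  proof (rule greedy_facts)
    show "greedy_output n m (\<lambda>s. U (fst (tp n s))) (\<lambda>s. d (snd (tp n s))) (\<lambda>c. real n * lb c) (alloc n)"
      using assms(10) nV unfolding V_def by blast
    show "\<forall>s<n. 0 < U (fst (tp n s)) \<and> U (fst (tp n s)) \<le> Umax"
      using tpI[OF nV] assms(3) UleM by (auto simp: mem_Times_iff)
    show "\<forall>s<n. 1 \<le> d (snd (tp n s))" using tpI[OF nV] assms(4) by (auto simp: mem_Times_iff)
    show "\<forall>c\<in>{1..m}. 0 \<le> real n * lb c" using assms(8) by (simp add: less_imp_le)
  qed (rule Um0)
  have sumUs: "(\<Sum>s<n. U (fst (tp n s))) = real n * D" if nV: "n \<in> V" for n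
  proof -
    have "(\<Sum>s<n. U (fst (tp n s))) = (\<Sum>i\<in>I. \<Sum>j\<in>J. U i * real (card {s\<in>{..<n}. tp n s = (i,j)}))"
      by (rule sum_by_type) (use fI fJ tpI[OF nV] in auto)
    also have "\<dots> = (\<Sum>i\<in>I. \<Sum>j\<in>J. U i * (real n * \<alpha> i j))"
    proof (intro sum.cong refl)
      fix i j assume ij: "i \<in> I" "j \<in> J"
      have "{s\<in>{..<n}. tp n s = (i,j)} = {s. s < n \<and> tp n s = (i, j)}" by auto
      thus "U i * real (card {s\<in>{..<n}. tp n s = (i,j)}) = U i * (real n * \<alpha> i j)"
        using tpC[OF nV] ij by simp
    qed
    also have "\<dots> = real n * D" unfolding D_def sum_distrib_left by (simp add: mult_ac)
    finally show ?thesis .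
  qed
  define T where "T = (\<lambda>n c. (\<Sum>s\<in>{s. s<n \<and> {c'. (s,c')\<in>alloc n} = {c}}. U (fst (tp n s))))"
  define Th where "Th = (\<lambda>n c. \<Sum>i\<in>I. \<Sum>j\<in>J. \<alpha> i j * U i * cache_frac \<alpha> (tp n) (alloc n) n i j {c})"
  have ThT: "Th n c = T n c / real n" if nV: "n \<in> V" and n0: "n > 0" for n c
  proof -
    define Sc where "Sc = {s. s<n \<and> {c'. (s,c')\<in>alloc n} = {c}}"
    have "T n c = (\<Sum>i\<in>I. \<Sum>j\<in>J. U i * real (card {s\<in>Sc. tp n s = (i,j)}))"
      unfolding T_def Sc_def[symmetric] by (rule sum_by_type) (use fI fJ tpI[OF nV] in \<open>auto simp: Sc_def\<close>)
    hence "T n c / real n = (\<Sum>i\<in>I. \<Sum>j\<in>J. U i * real (card {s\<in>Sc. tp n s = (i,j)}) / real n)"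
      by (simp add: sum_divide_distrib)
    also have "\<dots> = Th n c" unfolding Th_def
    proof (intro sum.cong refl)
      fix i j assume ij: "i \<in> I" "j \<in> J"
      have X: "{s\<in>Sc. tp n s = (i,j)} = {s. s < n \<and> tp n s = (i, j) \<and> {c'. (s,c')\<in>alloc n} = {c}}"
        unfolding Sc_def by auto
      show "U i * real (card {s\<in>Sc. tp n s = (i,j)}) / real n = \<alpha> i j * U i * cache_frac \<alpha> (tp n) (alloc n) n i j {c}"
      proof (cases "\<alpha> i j = 0")
        case True
        have "{s. s < n \<and> tp n s = (i, j) \<and> {c'. (s,c')\<in>alloc n} = {c}} \<subseteq> {s. s < n \<and> tp n s = (i, j)}" by auto
        hence "card {s. s < n \<and> tp n s = (i, j) \<and> {c'. (s,c')\<in>alloc n} = {c}} \<le> card {s. s < n \<and> tp n s = (i, j)}"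
          by (intro card_mono) auto
        moreover have "card {s. s < n \<and> tp n s = (i, j)} = 0" using tpC[OF nV] ij True by force
        ultimately show ?thesis using True X by simp
      next
        case False
        thus ?thesis unfolding cache_frac_def X using n0 by (simp add: field_simps)
      qed
    qed
    finally show ?thesis by simp
  qed
  have theta: "(\<Sum>i\<in>I. \<Sum>j\<in>J. \<alpha> i j * U i * q i j {c}) = t"
    if c: "c \<in> {1..m}" and bd: "\<forall>n\<in>V. n > 0 \<longrightarrow> \<bar>T n c - real n * t\<bar> \<le> K" for c t K
  proof (rule lim_eq)
    show "((\<lambda>n. Th n c) \<longlongrightarrow> (\<Sum>i\<in>I. \<Sum>j\<in>J. \<alpha> i j * U i * q i j {c})) Fl"
      unfolding Th_def Fl_def
    proof (intro tendsto_sum tendsto_mult_left)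
      fix i j assume "i \<in> I" "j \<in> J"
      thus "((\<lambda>n. cache_frac \<alpha> (tp n) (alloc n) n i j {c}) \<longlongrightarrow> q i j {c}) (inf sequentially (principal V))"
        using assms(11) c unfolding V_def by blast
    qed
    show "\<forall>n\<in>V. n > 0 \<longrightarrow> \<bar>Th n c - t\<bar> \<le> K / real n"
    proof (intro ballI impI)
      fix n assume nV: "n \<in> V" and n0: "n > 0"
      have "Th n c - t = (T n c - real n * t) / real n" using ThT[OF nV n0] n0 by (simp add: field_simps)
      hence "\<bar>Th n c - t\<bar> = \<bar>T n c - real n * t\<bar> / real n" by simp
      thus "\<bar>Th n c - t\<bar> \<le> K / real n" using bd nV n0 by (simp add: divide_right_mono)
    qed
  qed
  have P1: "\<forall>i\<in>I. \<forall>j\<in>J. \<forall>K. K \<subseteq> {1..m} \<and> card K \<ge> 2 \<longrightarrow> q i j K = 0"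
  proof (intro ballI allI impI)
    fix i j K assume ij: "i \<in> I" "j \<in> J" and K: "K \<subseteq> {1..m} \<and> card K \<ge> 2"
    show "q i j K = 0"
    proof (rule lim_eq)
      show "((\<lambda>n. cache_frac \<alpha> (tp n) (alloc n) n i j K) \<longlongrightarrow> q i j K) Fl"
        using assms(11) ij K unfolding Fl_def V_def by blast
      show "\<forall>n\<in>V. n > 0 \<longrightarrow> \<bar>cache_frac \<alpha> (tp n) (alloc n) n i j K - 0\<bar> \<le> (real m / \<alpha> i j) / real n"
      proof (intro ballI impI)
        fix n assume nV: "n \<in> V" and n0: "n > 0"
        define X where "X = {s. s < n \<and> tp n s = (i, j) \<and> {c. (s, c) \<in> alloc n} = K}"
        have "X \<subseteq> {s. s<n \<and> card {c. (s,c)\<in>alloc n} \<ge> 2}" unfolding X_def using K by auto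
        hence "card X \<le> card {s. s<n \<and> card {c. (s,c)\<in>alloc n} \<ge> 2}" by (intro card_mono) auto
        moreover obtain fc where "card {s. s<n \<and> card {c. (s,c)\<in>alloc n} \<ge> 2} \<le> m" using GF[OF nV] by blast
        ultimately have cX: "real (card X) \<le> real m" by simp
        have a0: "0 \<le> real n * \<alpha> i j" using assms(5) ij by simp
        have cf: "cache_frac \<alpha> (tp n) (alloc n) n i j K = real (card X) / (real n * \<alpha> i j)"
          unfolding cache_frac_def X_def ..
        have "real (card X) / (real n * \<alpha> i j) \<le> real m / (real n * \<alpha> i j)"
          using cX a0 by (rule divide_right_mono)
        moreover have "0 \<le> real (card X) / (real n * \<alpha> i j)" using a0 by simp
        moreover have "real m / (real n * \<alpha> i j) = (real m / \<alpha> i j) / real n" by (simp add: mult.commute)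
        ultimately show "\<bar>cache_frac \<alpha> (tp n) (alloc n) n i j K - 0\<bar> \<le> (real m / \<alpha> i j) / real n"
          using cf by simp
      qed
    qed
  qed
  have P2: "lbar / D \<le> 1 \<longrightarrow> (\<forall>c\<in>{1..m}. (\<Sum>i\<in>I. \<Sum>j\<in>J. \<alpha> i j * U i * q i j {c}) = lb c)"
  proof (intro impI ballI)
    assume "lbar / D \<le> 1"
    hence lD: "lbar \<le> D" using Dpos by (simp add: divide_le_eq)
    fix c assume c: "c \<in> {1..m}"
    show "(\<Sum>i\<in>I. \<Sum>j\<in>J. \<alpha> i j * U i * q i j {c}) = lb c"
    proof (rule theta[OF c, of _ "3 * real m * Umax"], intro ballI impI)
      fix n assume nV: "n \<in> V" and n0: "n > 0"
      obtain fc where fc: "\<forall>c\<in>{1..m}. 0 \<le> fc c \<and> fc c \<le> real n * lb c"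
        "\<forall>c\<in>{1..m}. \<bar>(real n * lb c - fc c) - T n c\<bar> \<le> 2 * real m * Umax"
        "min (\<Sum>c\<in>{1..m}. real n * lb c) (\<Sum>s<n. U (fst (tp n s))) - real m * Umax \<le> (\<Sum>c\<in>{1..m}. real n * lb c - fc c)"
        using GF[OF nV] unfolding T_def by blast
      have s1: "(\<Sum>c\<in>{1..m}. real n * lb c) = real n * lbar" unfolding lbar_def by (simp add: sum_distrib_left)
      have "real n * lbar \<le> real n * D" using lD by (simp add: mult_left_mono)
      hence mn: "min (\<Sum>c\<in>{1..m}. real n * lb c) (\<Sum>s<n. U (fst (tp n s))) = real n * lbar"
        using s1 sumUs[OF nV] by simp
      have "(\<Sum>c\<in>{1..m}. real n * lb c - fc c) = real n * lbar - (\<Sum>c\<in>{1..m}. fc c)"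
        using s1 by (simp add: sum_subtractf)
      hence sfc: "(\<Sum>c\<in>{1..m}. fc c) \<le> real m * Umax" using fc(3) mn by linarith
      have "fc c \<le> (\<Sum>c\<in>{1..m}. fc c)" by (rule member_le_sum) (use c fc(1) in auto)
      hence "fc c \<le> real m * Umax" "0 \<le> fc c" using sfc fc(1) c by auto
      moreover have "\<bar>(real n * lb c - fc c) - T n c\<bar> \<le> 2 * real m * Umax" using fc(2) c by blast
      ultimately show "\<bar>T n c - real n * lb c\<bar> \<le> 3 * real m * Umax" by linarith
    qed
  qed
  have P3: "lbar / D > 1 \<longrightarrow> (\<forall>c\<in>{1..m}. \<forall>c'\<in>{1..m}. c < c' \<longrightarrow> lb c' < lb c) \<longrightarrow>
              (\<forall>cs\<in>{1..m}.
                 (\<Sum>c'\<in>{1..<cs}. lb c') - real (cs - 1) * lb cs < lbar / (lbar / D) \<and>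
                 lbar / (lbar / D) \<le> (\<Sum>c'\<in>{1..cs}. lb c') - real cs * (if cs + 1 \<le> m then lb (cs + 1) else 0) \<longrightarrow>
                 (\<forall>c\<in>{1..m}. (\<Sum>i\<in>I. \<Sum>j\<in>J. \<alpha> i j * U i * q i j {c}) = (if c \<le> cs
                     then lb c - (1 / real cs) * ((\<Sum>c'\<in>{1..cs}. lb c') - lbar / (lbar / D))
                     else 0)))"
  proof (intro impI ballI)
    assume gt: "lbar / D > 1" and dec: "\<forall>c\<in>{1..m}. \<forall>c'\<in>{1..m}. c < c' \<longrightarrow> lb c' < lb c"
    fix cs assume cs: "cs \<in> {1..m}"
    assume iv: "(\<Sum>c'\<in>{1..<cs}. lb c') - real (cs - 1) * lb cs < lbar / (lbar / D) \<and>
                 lbar / (lbar / D) \<le> (\<Sum>c'\<in>{1..cs}. lb c') - real cs * (if cs + 1 \<le> m then lb (cs + 1) else 0)"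
    fix c assume c: "c \<in> {1..m}"
    have lD: "lbar > D" using gt Dpos by (simp add: less_divide_eq)
    have rD: "lbar / (lbar / D) = D" using lD Dpos by simp
    have cs1: "cs \<ge> 1" "cs \<le> m" using cs by auto
    define Sc where "Sc = (\<Sum>c'\<in>{1..cs}. lb c')"
    define Lr where "Lr = (Sc - D) / real cs"
    have Sc_split: "Sc = (\<Sum>c'\<in>{1..<cs}. lb c') + lb cs"
      unfolding Sc_def using cs1 by (simp add: atLeastLessThanSuc_atLeastAtMost[symmetric] sum.atLeastLessThan_Suc)
    have csr: "real cs > 0" using cs1 by simp
    have "real (cs - 1) = real cs - 1" using cs1 by simp
    hence "Sc - D < real cs * lb cs" using iv rD Sc_split by (simp add: algebra_simps)
    hence Lr_lt: "Lr < lb cs" unfolding Lr_def using csr by (simp add: divide_less_eq mult.commute)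
    have Lr_ge: "lb (cs + 1) \<le> Lr" if "cs + 1 \<le> m"
    proof -
      have "D \<le> Sc - real cs * lb (cs + 1)" using iv rD that unfolding Sc_def by simp
      hence "real cs * lb (cs + 1) \<le> Sc - D" by simp
      thus ?thesis unfolding Lr_def using csr by (simp add: le_divide_eq mult.commute)
    qed
    have lb1: "lb c' \<le> lb 1" if "c' \<in> {1..m}" for c'
    proof (cases "c' = 1")
      case False
      hence "1 < c'" "1 \<in> {1..m}" using that by auto
      thus ?thesis using dec that by (meson less_imp_le)
    qed simp
    have big: "Lr < lb c'" if "c' \<in> {1..m}" "c' \<le> cs" for c'
    proof (cases "c' = cs")
      case False
      hence "c' < cs" using that by simp
      hence "lb cs < lb c'" using dec that(1) cs by blast
      thus ?thesis using Lr_lt by simp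
    qed (use Lr_lt in simp)
    have small: "lb c' \<le> Lr" if "c' \<in> {1..m}" "\<not> c' \<le> cs" for c'
    proof (cases "c' = cs + 1")
      case True thus ?thesis using Lr_ge that by simp
    next
      case False
      hence "cs + 1 < c'" "cs + 1 \<in> {1..m}" using that by auto
      hence "lb c' < lb (cs + 1)" using dec that(1) by blast
      thus ?thesis using Lr_ge that by simp
    qed
    have tgt: "(if c \<le> cs then lb c - (1 / real cs) * (Sc - lbar / (lbar / D)) else 0) = lb c - min (lb c) Lr"
      using big[OF c] small[OF c] rD unfolding Lr_def by (auto simp: min_def)
    have sumD: "(\<Sum>c'\<in>{1..m}. max 0 (lb c' - Lr)) = D"
    proof -
      have "(\<Sum>c'\<in>{1..m}. max 0 (lb c' - Lr)) = (\<Sum>c'\<in>{1..m}. if c' \<le> cs then lb c' - Lr else 0)"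
      proof (rule sum.cong[OF refl])
        fix c' assume c'm: "c' \<in> {1..m}"
        show "max 0 (lb c' - Lr) = (if c' \<le> cs then lb c' - Lr else 0)"
        proof (cases "c' \<le> cs")
          case True thus ?thesis using big[OF c'm] by simp
        next
          case False thus ?thesis using small[OF c'm] by simp
        qed
      qed
      also have "\<dots> = (\<Sum>c'\<in>{c'\<in>{1..m}. c' \<le> cs}. lb c' - Lr)" by (rule sum.inter_filter[symmetric]) simp
      also have "{c'\<in>{1..m}. c' \<le> cs} = {1..cs}" using cs1 by auto
      also have "(\<Sum>c'\<in>{1..cs}. lb c' - Lr) = Sc - real cs * Lr" unfolding Sc_def by (simp add: sum_subtractf)
      also have "\<dots> = D" unfolding Lr_def using csr by simp
      finally show ?thesis .
    qed
    show "(\<Sum>i\<in>I. \<Sum>j\<in>J. \<alpha> i j * U i * q i j {c}) = (if c \<le> cs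
                     then lb c - (1 / real cs) * ((\<Sum>c'\<in>{1..cs}. lb c') - lbar / (lbar / D)) else 0)"
      unfolding Sc_def[symmetric] tgt
    proof (rule theta[OF c, of _ "4 * real m * Umax + Umax"], intro ballI impI)
      fix n assume nV: "n \<in> V" and n0: "n > 0"
      obtain fc where fc: "\<forall>c\<in>{1..m}. 0 \<le> fc c \<and> fc c \<le> real n * lb c"
        "\<forall>c\<in>{1..m}. \<forall>c'\<in>{1..m}. fc c < real n * lb c \<longrightarrow> fc c' \<le> fc c + Umax"
        "\<forall>c\<in>{1..m}. \<bar>(real n * lb c - fc c) - T n c\<bar> \<le> 2 * real m * Umax"
        "min (\<Sum>c\<in>{1..m}. real n * lb c) (\<Sum>s<n. U (fst (tp n s))) - real m * Umax \<le> (\<Sum>c\<in>{1..m}. real n * lb c - fc c)"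
        "(\<Sum>c\<in>{1..m}. real n * lb c - fc c) \<le> (\<Sum>s<n. U (fst (tp n s)))"
        using GF[OF nV] unfolding T_def by blast
      have nn: "0 \<le> real n" by simp
      have s1: "(\<Sum>c\<in>{1..m}. real n * lb c) = real n * lbar" unfolding lbar_def by (simp add: sum_distrib_left)
      have "real n * D \<le> real n * lbar" using lD by (simp add: mult_left_mono)
      hence mn: "min (\<Sum>c\<in>{1..m}. real n * lb c) (\<Sum>s<n. U (fst (tp n s))) = real n * D"
        using s1 sumUs[OF nV] by simp
      have mx: "(\<Sum>c'\<in>{1..m}. max 0 (real n * lb c' - real n * Lr)) = real n * D"
      proof -
        have "(\<Sum>c'\<in>{1..m}. max 0 (real n * lb c' - real n * Lr)) = (\<Sum>c'\<in>{1..m}. real n * max 0 (lb c' - Lr))"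
        proof (rule sum.cong[OF refl])
          fix c' show "max 0 (real n * lb c' - real n * Lr) = real n * max 0 (lb c' - Lr)"
          proof -
            have "real n * max 0 (lb c' - Lr) = max (real n * 0) (real n * (lb c' - Lr))"
              using nn max_mult_distrib_left[of "real n" 0 "lb c' - Lr"] by simp
            thus ?thesis by (simp add: right_diff_distrib)
          qed
        qed
        also have "\<dots> = real n * D" using sumD by (simp add: sum_distrib_left[symmetric])
        finally show ?thesis .
      qed
      have wfr: "\<forall>c\<in>{1..m}. \<bar>fc c - min (real n * lb c) (real n * Lr)\<bar> \<le> Umax + real m * Umax + real m * Umax"
      proof (rule waterfill)
        show "1 \<le> m" using cs1 by simp
        show "\<forall>c\<in>{1..m}. 0 \<le> fc c \<and> fc c \<le> real n * lb c" using fc(1) .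
        show "\<forall>c\<in>{1..m}. real n * lb c \<le> real n * lb 1" using lb1 nn by (simp add: mult_left_mono)
        show "\<forall>c\<in>{1..m}. \<forall>c'\<in>{1..m}. fc c < real n * lb c \<longrightarrow> fc c' \<le> fc c + Umax" using fc(2) .
        show "0 \<le> Umax" using Um0 .
        show "\<bar>(\<Sum>c\<in>{1..m}. real n * lb c - fc c) - (\<Sum>c\<in>{1..m}. max 0 (real n * lb c - real n * Lr))\<bar> \<le> real m * Umax"
          using fc(4,5) mn mx sumUs[OF nV] by linarith
        have "Lr \<le> lb 1" using Lr_lt lb1[of cs] cs by simp
        thus "real n * Lr \<le> real n * lb 1" using nn by (simp add: mult_left_mono)
      qed
      have "min (real n * lb c) (real n * Lr) = real n * min (lb c) Lr"
        using nn by (simp add: min_mult_distrib_left)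
      moreover have "\<bar>fc c - min (real n * lb c) (real n * Lr)\<bar> \<le> Umax + real m * Umax + real m * Umax" using wfr c by blast
      ultimately have "\<bar>fc c - real n * min (lb c) Lr\<bar> \<le> Umax + real m * Umax + real m * Umax" by simp
      moreover have "\<bar>(real n * lb c - fc c) - T n c\<bar> \<le> 2 * real m * Umax" using fc(3) c by blast
      ultimately show "\<bar>T n c - real n * (lb c - min (lb c) Lr)\<bar> \<le> 4 * real m * Umax + Umax"
        unfolding right_diff_distrib by linarith
    qed
  qed
  show ?thesis
    unfolding Let_def lbar_def[symmetric] D_def[symmetric] using P1 P2 P3 by simp
qed
end
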